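(* Let $A,B\subseteq V$ be disjoint and $O_A,O_B$ operators on the physical sites of $A$ and $B$ respectively. Assume $Z^X_{BP}\neq0$ for $X\in\{\emptyset,A,B,AB\}$, $\langle O_A\rangle,\langle O_B\rangle\ne0$, and that for each such $X$ the cluster expansion $\log\mathcal Z^X=\log Z^X_{BP}+\sum_{\mathbf W\text{ connected over }\mathcal L_{AB}}\phi(\mathbf W)Z^X_{\mathbf W}$ holds with an absolutely convergent series (with consistent choices of logarithm). Then the connected correlator $\langle O_AO_B\rangle_c:=\langle O_AO_B\rangle-\langle O_A\rangle\langle O_B\rangle$ satisfies $$\langle O_AO_B\rangle_c=\langle O_A\rangle\langle O_B\rangle\left[\exp\Bigg\{\sum_{\substack{\mathbf W\text{ connected over }\mathcal L_{AB}\\ \mathrm{supp}(\mathbf W)\cap A\ne\emptyset,\ \mathrm{supp}(\mathbf W)\cap B\ne\emptyset}}\phi(\mathbf W)\big(Z^{AB}_{\mathbf W}+Z_{\mathbf W}-Z^A_{\mathbf W}-Z^B_{\mathbf W}\big)\Bigg\}-1\right].$$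
   Context: Let $|\psi\rangle$ be a PEPS on a finite graph $G=(V,E)$; $\mathcal Z=\langle\psi|\psi\rangle>0$ is the norm network. For $X\in\{A,B,AB\}$, $\mathcal Z^X$ is the network for $\langle\psi|O_X|\psi\rangle$ with $O_X=O_A$, $O_B$, $O_AO_B$ respectively (operators inserted at the corresponding sites, tensors unchanged elsewhere); $\mathcal Z^\emptyset=\mathcal Z$. Expectations: $\langle O_X\rangle=\mathcal Z^X/\mathcal Z$. Fix a BP fixed point of $\mathcal Z$ (messages $\mu_{v\to w}$ with $I_{vw}=\mu_{v\to w}\star\mu_{w\to v}\ne0$, each vertex tensor contracted with all incoming messages except from $w$ proportional to $\mu_{v\to w}$), used for all networks; $\mathcal P^\perp_{vw}=\mathbb 1-\mu_{v\to w}\otimes\mu_{w\to v}/I_{vw}$. For $F\subseteq E$, $\tilde Z^X_F$ is the contraction of $\mathcal Z^X$ with $\mathcal P^\perp$ on edges in $F$ and $\mu\otimes\mu/I$ elsewhere; $Z^X_{BP}=\tilde Z^X_\emptyset$. $\mathcal L_{AB}$: connected subgraphs of $G$ with at least one edge in which every vertex not in $A\cup B$ has degree $\ge2$; supports are vertex sets; weights $Z^X_l=\tilde Z^X_{E(l)}/Z^X_{BP}$ (no superscript = $\mathcal Z$). Compatible = vertex-disjoint. Clusters $\mathbf W=\{(l_i,\eta_i)\}$ are finite multisets over $\mathcal L_{AB}$ with $Z^X_{\mathbf W}=\prod(Z^X_{l_i})^{\eta_i}$, $\mathrm{supp}(\mathbf W)=\bigcup\mathrm{supp}(l_i)$; interaction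 graph: $\eta_i$ vertices per $l_i$, adjacent iff equal or incompatible; connected if it is connected. Ursell function $\phi(\mathbf W)=\frac1{\prod\eta_i!}\sum_C(-1)^{|E(C)|}$ over connected spanning subgraphs $C$ of the interaction graph. *)

theory Defs
  imports "HOL-Analysis.Analysis" "HOL-Library.Multiset"
begin

text \<open>Graph G = (V,E): E is a set of 2-element subsets of V.
  PEPS: bond dimension d e on each edge, physical dimension p v on each vertex,
  local tensors Aten v s alpha (s < p v physical index, alpha assigns a bond index
  < d e to each edge e incident to v).
  Norm network: each edge carries a pair (ket index, bra index).
  Half-edge configurations h v e : index pair on edge e at its end v.\<close>

definition inc :: "'v set set \<Rightarrow> 'v \<Rightarrow> 'v set set" where
  "inc E v = {e \<in> E. v \<in> e}"

definition bonds :: "('v set \<Rightarrow> nat) \<Rightarrow> 'v set \<Rightarrow> (nat \<times> nat) set" where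
  "bonds d e = {..<d e} \<times> {..<d e}"

definition hconfigs :: "'v set \<Rightarrow> 'v set set \<Rightarrow> ('v set \<Rightarrow> nat)
    \<Rightarrow> ('v \<Rightarrow> 'v set \<Rightarrow> nat \<times> nat) set" where
  "hconfigs V E d = (\<Pi>\<^sub>E v\<in>V. \<Pi>\<^sub>E e\<in>inc E v. bonds d e)"

definition physconf :: "('v \<Rightarrow> nat) \<Rightarrow> 'v set \<Rightarrow> ('v \<Rightarrow> nat) set" where
  "physconf p S = (\<Pi>\<^sub>E v\<in>S. {..<p v})"

text \<open>Double-layer block tensor on the sites S with operator O (matrix on the
  physical configurations of S) inserted: sum_{s,s'} O(s,s') A^{s'} (ket) conj(A^{s}) (bra),
  i.e. the block of the network for <psi|O|psi>.\<close>
definition blockT :: "'v set set \<Rightarrow> ('v \<Rightarrow> nat) \<Rightarrow> ('v \<Rightarrow> nat \<Rightarrow> ('v set \<Rightarrow> nat) \<Rightarrow> complex)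
    \<Rightarrow> 'v set \<Rightarrow> (('v \<Rightarrow> nat) \<Rightarrow> ('v \<Rightarrow> nat) \<Rightarrow> complex)
    \<Rightarrow> ('v \<Rightarrow> 'v set \<Rightarrow> nat \<times> nat) \<Rightarrow> complex" where
  "blockT E p Aten S Op h =
     (\<Sum>s\<in>physconf p S. \<Sum>s'\<in>physconf p S. Op s s' *
        (\<Prod>v\<in>S. Aten v (s' v) (\<lambda>e\<in>inc E v. fst (h v e)) *
                  cnj (Aten v (s v) (\<lambda>e\<in>inc E v. snd (h v e)))))"

definition normT :: "'v set set \<Rightarrow> ('v \<Rightarrow> nat) \<Rightarrow> ('v \<Rightarrow> nat \<Rightarrow> ('v set \<Rightarrow> nat) \<Rightarrow> complex)
    \<Rightarrow> 'v \<Rightarrow> ('v set \<Rightarrow> nat \<times> nat) \<Rightarrow> complex" where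
  "normT E p Aten v x =
     (\<Sum>t<p v. Aten v t (\<lambda>e\<in>inc E v. fst (x e)) * cnj (Aten v t (\<lambda>e\<in>inc E v. snd (x e))))"

text \<open>Contraction of the network with operator O inserted on the sites S and with
  the matrix M e placed on each edge e; M e is a function of the two half-edge
  indices, given as a map from the endpoints of e to index pairs.\<close>
definition netc :: "'v set \<Rightarrow> 'v set set \<Rightarrow> ('v set \<Rightarrow> nat) \<Rightarrow> ('v \<Rightarrow> nat)
    \<Rightarrow> ('v \<Rightarrow> nat \<Rightarrow> ('v set \<Rightarrow> nat) \<Rightarrow> complex)
    \<Rightarrow> 'v set \<Rightarrow> (('v \<Rightarrow> nat) \<Rightarrow> ('v \<Rightarrow> nat) \<Rightarrow> complex)
    \<Rightarrow> ('v set \<Rightarrow> ('v \<Rightarrow> nat \<times> nat) \<Rightarrow> complex) \<Rightarrow> complex" where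
  "netc V E d p Aten S Op M =
     (\<Sum>h\<in>hconfigs V E d. blockT E p Aten S Op h *
         (\<Prod>v\<in>V - S. normT E p Aten v (h v)) *
         (\<Prod>e\<in>E. M e (\<lambda>u\<in>e. h u e)))"

definition other :: "'v \<Rightarrow> 'v set \<Rightarrow> 'v" where
  "other u e = (THE w. w \<in> e \<and> w \<noteq> u)"

text \<open>Messages: mu v w is the message from v to w, a vector on index pairs of edge {v,w}.\<close>
definition msgI :: "('v \<Rightarrow> 'v \<Rightarrow> nat \<times> nat \<Rightarrow> complex) \<Rightarrow> ('v set \<Rightarrow> nat) \<Rightarrow> 'v set \<Rightarrow> complex" where
  "msgI mu d e = (\<Sum>x\<in>bonds d e. \<Prod>u\<in>e. mu u (other u e) x)"

definition idm :: "'v set \<Rightarrow> ('v \<Rightarrow> nat \<times> nat) \<Rightarrow> complex" where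
  "idm e g = (if \<forall>u\<in>e. \<forall>w\<in>e. g u = g w then 1 else 0)"

text \<open>Rank-one BP projector mu_{v->w} (x) mu_{w->v} / I_vw: the end at u is
  contracted with the message coming into u.\<close>
definition bpproj :: "('v \<Rightarrow> 'v \<Rightarrow> nat \<times> nat \<Rightarrow> complex) \<Rightarrow> ('v set \<Rightarrow> nat) \<Rightarrow> 'v set
    \<Rightarrow> ('v \<Rightarrow> nat \<times> nat) \<Rightarrow> complex" where
  "bpproj mu d e g = (\<Prod>u\<in>e. mu (other u e) u (g u)) / msgI mu d e"

definition edgeM :: "('v \<Rightarrow> 'v \<Rightarrow> nat \<times> nat \<Rightarrow> complex) \<Rightarrow> ('v set \<Rightarrow> nat) \<Rightarrow> 'v set set
    \<Rightarrow> 'v set \<Rightarrow> ('v \<Rightarrow> nat \<times> nat) \<Rightarrow> complex" where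
  "edgeM mu d F e g = (if e \<in> F then idm e g - bpproj mu d e g else bpproj mu d e g)"

definition Zfull where
  "Zfull V E d p Aten S Op = netc V E d p Aten S Op (\<lambda>e. idm e)"

definition Ztilde where
  "Ztilde V E d p Aten mu S Op F = netc V E d p Aten S Op (edgeM mu d F)"

definition ZBP where
  "ZBP V E d p Aten mu S Op = Ztilde V E d p Aten mu S Op {}"

definition bp_fixed_point where
  "bp_fixed_point V E d p Aten mu \<longleftrightarrow>
     (\<forall>e\<in>E. msgI mu d e \<noteq> 0) \<and>
     (\<forall>v\<in>V. \<forall>e\<in>inc E v. \<exists>c::complex. \<forall>x\<in>bonds d e.
        (\<Sum>y\<in>{y\<in>(\<Pi>\<^sub>E e'\<in>inc E v. bonds d e'). y e = x}.
            normT E p Aten v y * (\<Prod>e'\<in>inc E v - {e}. mu (other v e') v (y e')))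
        = c * mu v (other v e) x)"

text \<open>Polymers L_AB: a polymer is the (nonempty) edge set F of a connected subgraph;
  its vertex set (support) is the union of F.\<close>
definition esupp :: "'v set set \<Rightarrow> 'v set" where
  "esupp F = \<Union>F"

definition edges_connected :: "'v set set \<Rightarrow> bool" where
  "edges_connected F \<longleftrightarrow>
     (\<forall>u\<in>\<Union>F. \<forall>w\<in>\<Union>F. (u, w) \<in> {(x, y). \<exists>e\<in>F. x \<in> e \<and> y \<in> e}\<^sup>*)"

definition polymers :: "'v set set \<Rightarrow> 'v set \<Rightarrow> 'v set \<Rightarrow> 'v set set set" where
  "polymers E A B = {F. F \<subseteq> E \<and> F \<noteq> {} \<and> edges_connected F \<and>
        (\<forall>v\<in>\<Union>F - (A \<union> B). card (inc F v) \<ge> 2)}"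

definition iedges :: "'v set set list \<Rightarrow> nat set set" where
  "iedges xs = {{i, j} | i j. i < length xs \<and> j < length xs \<and> i \<noteq> j \<and>
        (xs ! i = xs ! j \<or> esupp (xs ! i) \<inter> esupp (xs ! j) \<noteq> {})}"

definition spans_connected :: "nat \<Rightarrow> nat set set \<Rightarrow> bool" where
  "spans_connected n C \<longleftrightarrow> (\<forall>i<n. \<forall>j<n. (i, j) \<in> {(a, b). {a, b} \<in> C}\<^sup>*)"

definition enum_cluster :: "'v set set multiset \<Rightarrow> 'v set set list" where
  "enum_cluster W = (SOME xs. mset xs = W)"

definition cluster_connected :: "'v set set multiset \<Rightarrow> bool" where
  "cluster_connected W \<longleftrightarrow> W \<noteq> {#} \<and>
     spans_connected (size W) (iedges (enum_cluster W))"

definition ursell :: "'v set set multiset \<Rightarrow> real" where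
  "ursell W = (1 / (\<Prod>l\<in>set_mset W. fact (count W l))) *
     (\<Sum>C\<in>{C. C \<subseteq> iedges (enum_cluster W) \<and> spans_connected (size W) C}.
        (-1) ^ card C)"

definition connected_clusters :: "'v set set \<Rightarrow> 'v set \<Rightarrow> 'v set \<Rightarrow> 'v set set multiset set" where
  "connected_clusters E A B = {W. set_mset W \<subseteq> polymers E A B \<and> cluster_connected W}"

definition csupp :: "'v set set multiset \<Rightarrow> 'v set" where
  "csupp W = (\<Union>l\<in>set_mset W. esupp l)"

definition Zpoly where
  "Zpoly V E d p Aten mu S Op l = Ztilde V E d p Aten mu S Op l / ZBP V E d p Aten mu S Op"

definition Zclus where
  "Zclus V E d p Aten mu S Op W = (\<Prod>l\<in>set_mset W. (Zpoly V E d p Aten mu S Op l) ^ count W l)"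

definition expect where
  "expect V E d p Aten S Op = Zfull V E d p Aten S Op / Zfull V E d p Aten {} (\<lambda>_ _. 1)"

definition opprod :: "'v set \<Rightarrow> (('v \<Rightarrow> nat) \<Rightarrow> ('v \<Rightarrow> nat) \<Rightarrow> complex) \<Rightarrow> 'v set
    \<Rightarrow> (('v \<Rightarrow> nat) \<Rightarrow> ('v \<Rightarrow> nat) \<Rightarrow> complex) \<Rightarrow> ('v \<Rightarrow> nat) \<Rightarrow> ('v \<Rightarrow> nat) \<Rightarrow> complex" where
  "opprod A OA B OB s s' = OA (restrict s A) (restrict s' A) * OB (restrict s B) (restrict s' B)"

end

theory Submission
  imports Defs
begin

definition mrg :: "'a set \<Rightarrow> ('a \<Rightarrow> 'b) \<Rightarrow> ('a \<Rightarrow> 'b) \<Rightarrow> 'a \<Rightarrow> 'b" where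
  "mrg J h1 h2 = (\<lambda>v. if v \<in> J then h2 v else h1 v)"

lemma mrg_PiE: "J \<subseteq> I \<Longrightarrow> h1 \<in> PiE (I - J) C \<Longrightarrow> h2 \<in> PiE J C \<Longrightarrow> mrg J h1 h2 \<in> PiE I C"
  unfolding mrg_def PiE_def extensional_def by auto

lemma sum_PiE_split:
  fixes f :: "_ \<Rightarrow> 'c::comm_monoid_add"
  assumes "J \<subseteq> I"
  shows "(\<Sum>h\<in>PiE I C. f h) = (\<Sum>h1\<in>PiE (I-J) C. \<Sum>h2\<in>PiE J C. f (mrg J h1 h2))"
proof -
  have inv: "mrg J (restrict a (I - J)) (restrict a J) = a" if a: "a \<in> PiE I C" for a
      using a assms unfolding mrg_def PiE_def extensional_def by (auto simp: fun_eq_iff)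
  have "(\<Sum>h\<in>PiE I C. f h) = (\<Sum>z\<in>PiE (I-J) C \<times> PiE J C. f (mrg J (fst z) (snd z)))"
  proof (rule sum.reindex_bij_witness[where j = "\<lambda>h. (restrict h (I-J), restrict h J)"
        and i = "\<lambda>z. mrg J (fst z) (snd z)"])
    fix a assume a: "a \<in> PiE I C"
    show "mrg J (fst (restrict a (I - J), restrict a J)) (snd (restrict a (I - J), restrict a J)) = a"
      using a assms unfolding mrg_def PiE_def extensional_def by (auto simp: fun_eq_iff)
    show "(restrict a (I - J), restrict a J) \<in> PiE (I-J) C \<times> PiE J C" using a assms by auto
  next
    fix b assume b: "b \<in> PiE (I-J) C \<times> PiE J C"
    show "(restrict (mrg J (fst b) (snd b)) (I - J), restrict (mrg J (fst b) (snd b)) J) = b"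
      using b unfolding mrg_def PiE_def extensional_def by (cases b) (auto simp: fun_eq_iff)
    show "mrg J (fst b) (snd b) \<in> PiE I C" using b by (auto intro!: mrg_PiE[OF assms])
  qed (auto simp: inv)
  also have "\<dots> = (\<Sum>h1\<in>PiE (I-J) C. \<Sum>h2\<in>PiE J C. f (mrg J h1 h2))"
    by (simp add: sum.cartesian_product case_prod_beta)
  finally show ?thesis .
qed

lemma restrict_mrg1: "h1 \<in> PiE (I-J) C \<Longrightarrow> restrict (mrg J h1 h2) (I - J) = h1"
  unfolding mrg_def PiE_def extensional_def by (auto simp: fun_eq_iff)
lemma restrict_mrg2: "h2 \<in> PiE J C \<Longrightarrow> restrict (mrg J h1 h2) J = h2"
  unfolding mrg_def PiE_def extensional_def by (auto simp: fun_eq_iff)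

lemma blockT_cong_h: "(\<And>v. v \<in> S \<Longrightarrow> h v = h' v) \<Longrightarrow> blockT E p Aten S Op h = blockT E p Aten S Op h'"
  unfolding blockT_def by (intro sum.cong refl prod.cong) auto

lemma blockT_cong_Op: "(\<And>s s'. s \<in> physconf p S \<Longrightarrow> s' \<in> physconf p S \<Longrightarrow> Op s s' = Op' s s')
   \<Longrightarrow> blockT E p Aten S Op h = blockT E p Aten S Op' h"
  unfolding blockT_def by (intro sum.cong refl) auto

lemma blockT_union:
  assumes fin: "finite S" "finite T" and dj: "S \<inter> T = {}"
  shows "blockT E p Aten (S \<union> T) (opprod S OS T OT) h = blockT E p Aten S OS h * blockT E p Aten T OT h"
proof -
  define K where "K v t t' = Aten v t' (\<lambda>e\<in>inc E v. fst (h v e)) * cnj (Aten v t (\<lambda>e\<in>inc E v. snd (h v e)))" for v t t'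
  define P where "P X = physconf p X" for X
  have ST: "(S \<union> T) - T = S" using dj by auto
  have spl: "(\<Sum>s\<in>P (S \<union> T). g s) = (\<Sum>s1\<in>P S. \<Sum>s2\<in>P T. g (mrg T s1 s2))" for g :: "_ \<Rightarrow> complex"
    unfolding P_def physconf_def using sum_PiE_split[where J=T and I="S \<union> T" and C="\<lambda>v. {..<p v}" and f=g] ST by auto
  have prodspl: "(\<Prod>v\<in>S \<union> T. K v (mrg T s1 s2 v) (mrg T s1' s2' v)) =
      (\<Prod>v\<in>S. K v (s1 v) (s1' v)) * (\<Prod>v\<in>T. K v (s2 v) (s2' v))" for s1 s2 s1' s2'
  proof -
    have "(\<Prod>v\<in>S \<union> T. K v (mrg T s1 s2 v) (mrg T s1' s2' v)) =
      (\<Prod>v\<in>S. K v (mrg T s1 s2 v) (mrg T s1' s2' v)) * (\<Prod>v\<in>T. K v (mrg T s1 s2 v) (mrg T s1' s2' v))"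
      using fin dj by (simp add: prod.union_disjoint)
    also have "\<dots> = (\<Prod>v\<in>S. K v (s1 v) (s1' v)) * (\<Prod>v\<in>T. K v (s2 v) (s2' v))"
      using dj by (auto simp: mrg_def intro!: arg_cong2[where f="(*)"] prod.cong)
    finally show ?thesis .
  qed
  have rS: "restrict (mrg T s1 s2) S = s1" if "s1 \<in> P S" for s1 s2
    using restrict_mrg1[of s1 "S \<union> T" T] that ST unfolding P_def physconf_def by auto
  have rT: "restrict (mrg T s1 s2) T = s2" if "s2 \<in> P T" for s1 s2
    using restrict_mrg2[of s2 T] that unfolding P_def physconf_def by auto
  have "blockT E p Aten (S \<union> T) (opprod S OS T OT) h =
     (\<Sum>s\<in>P (S \<union> T). \<Sum>s'\<in>P (S \<union> T). opprod S OS T OT s s' * (\<Prod>v\<in>S \<union> T. K v (s v) (s' v)))"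
    unfolding blockT_def K_def P_def ..
  also have "\<dots> = (\<Sum>s1\<in>P S. \<Sum>s2\<in>P T. \<Sum>s1'\<in>P S. \<Sum>s2'\<in>P T.
      (OS s1 s1' * (\<Prod>v\<in>S. K v (s1 v) (s1' v))) * (OT s2 s2' * (\<Prod>v\<in>T. K v (s2 v) (s2' v))))"
    unfolding spl
    by (intro sum.cong refl) (simp add: prodspl opprod_def rS rT mult_ac)
  also have "\<dots> = (\<Sum>s1\<in>P S. \<Sum>s1'\<in>P S. OS s1 s1' * (\<Prod>v\<in>S. K v (s1 v) (s1' v))) *
       (\<Sum>s2\<in>P T. \<Sum>s2'\<in>P T. OT s2 s2' * (\<Prod>v\<in>T. K v (s2 v) (s2' v)))"
    by (simp add: sum_product sum.swap[of _ "P T" "P S"])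
  also have "\<dots> = blockT E p Aten S OS h * blockT E p Aten T OT h"
    unfolding blockT_def K_def P_def ..
  finally show ?thesis .
qed

definition EB :: "'v set set \<Rightarrow> 'v set \<Rightarrow> 'v set set" where "EB E B = {e\<in>E. e \<inter> B \<noteq> {}}"
definition msgB where "msgB mu E B h2 = (\<Prod>e\<in>EB E B. \<Prod>u\<in>e \<inter> B. mu (other u e) u (h2 u e))"
definition YB where "YB E d p Aten mu B OB =
  (\<Sum>h2\<in>PiE B (\<lambda>v. PiE (inc E v) (bonds d)). blockT E p Aten B OB h2 * msgB mu E B h2)"
definition YB' where "YB' E d p Aten mu B =
  (\<Sum>h2\<in>PiE B (\<lambda>v. PiE (inc E v) (bonds d)). (\<Prod>v\<in>B. normT E p Aten v (h2 v)) * msgB mu E B h2)"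

lemma factor:
  assumes finV: "finite V" and graph: "\<forall>e\<in>E. e \<subseteq> V \<and> card e = 2"
    and BV: "B \<subseteq> V" and SxV: "Sx \<subseteq> V" and dj: "Sx \<inter> B = {}" and FB: "\<forall>e\<in>F. e \<inter> B = {}"
  shows "\<exists>X. Ztilde V E d p Aten mu (Sx \<union> B) (opprod Sx Ox B OB) F = X * YB E d p Aten mu B OB
           \<and> Ztilde V E d p Aten mu Sx Ox F = X * YB' E d p Aten mu B"
proof -
  define C where "C v = PiE (inc E v) (bonds d)" for v
  have hc: "hconfigs V E d = PiE V C" unfolding hconfigs_def C_def ..
  have finE: "finite E" using graph finV by (meson PowI finite_Pow_iff finite_subset subsetI)
  have fine: "finite e" if "e \<in> E" for e using graph that card.infinite by fastforce
  have finSx: "finite Sx" and finB: "finite B" using finV SxV BV finite_subset by auto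
  define E1 where "E1 h1 = (\<Prod>e\<in>E - EB E B. edgeM mu d F e (\<lambda>u\<in>e. h1 u e)) *
      (\<Prod>e\<in>EB E B. (\<Prod>u\<in>e - B. mu (other u e) u (h1 u e)) / msgI mu d e)" for h1
  define N1 where "N1 h1 = (\<Prod>v\<in>V - Sx - B. normT E p Aten v (h1 v))" for h1
  define Phi where "Phi h1 = blockT E p Aten Sx Ox h1 * N1 h1 * E1 h1" for h1
  have edges: "(\<Prod>e\<in>E. edgeM mu d F e (\<lambda>u\<in>e. mrg B h1 h2 u e)) = E1 h1 * msgB mu E B h2" for h1 h2
  proof -
    have sub: "EB E B \<subseteq> E" unfolding EB_def by auto
    have "(\<Prod>e\<in>E. edgeM mu d F e (\<lambda>u\<in>e. mrg B h1 h2 u e)) =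
       (\<Prod>e\<in>E - EB E B. edgeM mu d F e (\<lambda>u\<in>e. mrg B h1 h2 u e)) *
       (\<Prod>e\<in>EB E B. edgeM mu d F e (\<lambda>u\<in>e. mrg B h1 h2 u e))"
      using prod.subset_diff[OF sub finE] by simp
    also have "(\<Prod>e\<in>E - EB E B. edgeM mu d F e (\<lambda>u\<in>e. mrg B h1 h2 u e)) =
        (\<Prod>e\<in>E - EB E B. edgeM mu d F e (\<lambda>u\<in>e. h1 u e))"
    proof (rule prod.cong[OF refl])
      fix e assume "e \<in> E - EB E B"
      then have "e \<inter> B = {}" unfolding EB_def by auto
      then have "(\<lambda>u\<in>e. mrg B h1 h2 u e) = (\<lambda>u\<in>e. h1 u e)" unfolding mrg_def by (auto simp: fun_eq_iff)
      then show "edgeM mu d F e (\<lambda>u\<in>e. mrg B h1 h2 u e) = edgeM mu d F e (\<lambda>u\<in>e. h1 u e)" by simp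
    qed
    also have "(\<Prod>e\<in>EB E B. edgeM mu d F e (\<lambda>u\<in>e. mrg B h1 h2 u e)) =
        (\<Prod>e\<in>EB E B. ((\<Prod>u\<in>e - B. mu (other u e) u (h1 u e)) / msgI mu d e) *
            (\<Prod>u\<in>e \<inter> B. mu (other u e) u (h2 u e)))"
    proof (rule prod.cong[OF refl])
      fix e assume e: "e \<in> EB E B"
      then have eF: "e \<notin> F" using FB unfolding EB_def by auto
      have fe: "finite e" using e sub fine by auto
      have "edgeM mu d F e (\<lambda>u\<in>e. mrg B h1 h2 u e) = (\<Prod>u\<in>e. mu (other u e) u (mrg B h1 h2 u e)) / msgI mu d e"
        using eF unfolding edgeM_def bpproj_def by (auto intro!: prod.cong)
      also have "(\<Prod>u\<in>e. mu (other u e) u (mrg B h1 h2 u e)) =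
          (\<Prod>u\<in>e \<inter> B. mu (other u e) u (mrg B h1 h2 u e)) * (\<Prod>u\<in>e - B. mu (other u e) u (mrg B h1 h2 u e))"
        using prod.Int_Diff[OF fe] by blast
      also have "\<dots> = (\<Prod>u\<in>e \<inter> B. mu (other u e) u (h2 u e)) * (\<Prod>u\<in>e - B. mu (other u e) u (h1 u e))"
        unfolding mrg_def by (auto intro!: arg_cong2[where f="(*)"] prod.cong)
      finally show "edgeM mu d F e (\<lambda>u\<in>e. mrg B h1 h2 u e) = ((\<Prod>u\<in>e - B. mu (other u e) u (h1 u e)) / msgI mu d e) *
            (\<Prod>u\<in>e \<inter> B. mu (other u e) u (h2 u e))" by (simp add: restrict_def)
    qed
    also have "\<dots> = (\<Prod>e\<in>EB E B. (\<Prod>u\<in>e - B. mu (other u e) u (h1 u e)) / msgI mu d e) * msgB mu E B h2"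
      unfolding msgB_def by (rule prod.distrib)
    finally show ?thesis unfolding E1_def by (simp add: mult_ac restrict_def)
  qed
  have blk1: "blockT E p Aten (Sx \<union> B) (opprod Sx Ox B OB) (mrg B h1 h2) = blockT E p Aten Sx Ox h1 * blockT E p Aten B OB h2" for h1 h2
  proof -
    have "blockT E p Aten (Sx \<union> B) (opprod Sx Ox B OB) (mrg B h1 h2) =
       blockT E p Aten Sx Ox (mrg B h1 h2) * blockT E p Aten B OB (mrg B h1 h2)"
      by (rule blockT_union[OF finSx finB dj])
    also have "blockT E p Aten Sx Ox (mrg B h1 h2) = blockT E p Aten Sx Ox h1"
      using dj by (intro blockT_cong_h) (auto simp: mrg_def)
    also have "blockT E p Aten B OB (mrg B h1 h2) = blockT E p Aten B OB h2"
      by (intro blockT_cong_h) (auto simp: mrg_def)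
    finally show ?thesis .
  qed
  have nrm1: "(\<Prod>v\<in>V - (Sx \<union> B). normT E p Aten v (mrg B h1 h2 v)) = N1 h1" for h1 h2
    unfolding N1_def by (auto simp: mrg_def intro!: prod.cong)
  have nrm2: "(\<Prod>v\<in>V - Sx. normT E p Aten v (mrg B h1 h2 v)) = N1 h1 * (\<Prod>v\<in>B. normT E p Aten v (h2 v))" for h1 h2
  proof -
    have eq: "V - Sx = (V - Sx - B) \<union> B" using BV dj by auto
    have "(\<Prod>v\<in>V - Sx. normT E p Aten v (mrg B h1 h2 v)) =
       (\<Prod>v\<in>V - Sx - B. normT E p Aten v (mrg B h1 h2 v)) * (\<Prod>v\<in>B. normT E p Aten v (mrg B h1 h2 v))"
      by (subst eq, rule prod.union_disjoint) (use finV finB in auto)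
    then show ?thesis unfolding N1_def by (simp add: mrg_def)
  qed
  have split: "(\<Sum>h\<in>PiE V C. f h) = (\<Sum>h1\<in>PiE (V-B) C. \<Sum>h2\<in>PiE B C. f (mrg B h1 h2))" for f :: "_ \<Rightarrow> complex"
    by (rule sum_PiE_split[OF BV])
  have "Ztilde V E d p Aten mu (Sx \<union> B) (opprod Sx Ox B OB) F =
     (\<Sum>h1\<in>PiE (V-B) C. \<Sum>h2\<in>PiE B C. Phi h1 * (blockT E p Aten B OB h2 * msgB mu E B h2))"
    unfolding Ztilde_def netc_def hc split
    by (intro sum.cong refl) (simp add: blk1 nrm1 edges Phi_def mult_ac)
  also have "\<dots> = sum Phi (PiE (V-B) C) * YB E d p Aten mu B OB"
    unfolding YB_def C_def by (simp add: sum_product)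
  finally have 1: "Ztilde V E d p Aten mu (Sx \<union> B) (opprod Sx Ox B OB) F = sum Phi (PiE (V-B) C) * YB E d p Aten mu B OB" .
  have "Ztilde V E d p Aten mu Sx Ox F =
     (\<Sum>h1\<in>PiE (V-B) C. \<Sum>h2\<in>PiE B C. Phi h1 * ((\<Prod>v\<in>B. normT E p Aten v (h2 v)) * msgB mu E B h2))"
    unfolding Ztilde_def netc_def hc split
  proof (intro sum.cong refl)
    fix h1 h2
    have "blockT E p Aten Sx Ox (mrg B h1 h2) = blockT E p Aten Sx Ox h1"
      using dj by (intro blockT_cong_h) (auto simp: mrg_def)
    then show "blockT E p Aten Sx Ox (mrg B h1 h2) * (\<Prod>v\<in>V - Sx. normT E p Aten v (mrg B h1 h2 v)) *
         (\<Prod>e\<in>E. edgeM mu d F e (\<lambda>u\<in>e. mrg B h1 h2 u e)) =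
         Phi h1 * ((\<Prod>v\<in>B. normT E p Aten v (h2 v)) * msgB mu E B h2)"
      by (simp add: nrm2 edges Phi_def mult_ac)
  qed
  also have "\<dots> = sum Phi (PiE (V-B) C) * YB' E d p Aten mu B"
    unfolding YB'_def C_def by (simp add: sum_product)
  finally show ?thesis using 1 by blast
qed

lemma poly_eqB:
  assumes finV: "finite V" and graph: "\<forall>e\<in>E. e \<subseteq> V \<and> card e = 2"
    and BV: "B \<subseteq> V" and SxV: "Sx \<subseteq> V" and dj: "Sx \<inter> B = {}" and FB: "\<forall>e\<in>F. e \<inter> B = {}"
    and nz1: "ZBP V E d p Aten mu (Sx \<union> B) (opprod Sx Ox B OB) \<noteq> 0"
    and nz2: "ZBP V E d p Aten mu Sx Ox \<noteq> 0"
  shows "Zpoly V E d p Aten mu (Sx \<union> B) (opprod Sx Ox B OB) F = Zpoly V E d p Aten mu Sx Ox F"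
proof -
  obtain X where X: "Ztilde V E d p Aten mu (Sx \<union> B) (opprod Sx Ox B OB) F = X * YB E d p Aten mu B OB"
           "Ztilde V E d p Aten mu Sx Ox F = X * YB' E d p Aten mu B"
    using factor[OF finV graph BV SxV dj FB] by blast
  obtain X0 where X0: "Ztilde V E d p Aten mu (Sx \<union> B) (opprod Sx Ox B OB) {} = X0 * YB E d p Aten mu B OB"
           "Ztilde V E d p Aten mu Sx Ox {} = X0 * YB' E d p Aten mu B"
    using factor[OF finV graph BV SxV dj, of "{}"] by blast
  have "YB E d p Aten mu B OB \<noteq> 0" "YB' E d p Aten mu B \<noteq> 0" "X0 \<noteq> 0"
    using nz1 nz2 X0 unfolding ZBP_def by auto
  then show ?thesis unfolding Zpoly_def ZBP_def X X0 by simp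
qed

lemma Ztilde_opprod_empty:
  "Ztilde V E d p Aten mu B (opprod {} (\<lambda>_ _. 1) B OB) F = Ztilde V E d p Aten mu B OB F"
proof -
  have "blockT E p Aten B (opprod {} (\<lambda>_ _. 1) B OB) h = blockT E p Aten B OB h" for h
    by (rule blockT_cong_Op) (auto simp: opprod_def physconf_def)
  then show ?thesis unfolding Ztilde_def netc_def by simp
qed

lemma ZBP_opprod_empty:
  "ZBP V E d p Aten mu B (opprod {} (\<lambda>_ _. 1) B OB) = ZBP V E d p Aten mu B OB"
  unfolding ZBP_def by (rule Ztilde_opprod_empty)

lemma Zpoly_opprod_empty:
  "Zpoly V E d p Aten mu B (opprod {} (\<lambda>_ _. 1) B OB) F = Zpoly V E d p Aten mu B OB F"
  unfolding Zpoly_def by (simp add: Ztilde_opprod_empty ZBP_opprod_empty)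

lemma poly_eqB0:
  assumes finV: "finite V" and graph: "\<forall>e\<in>E. e \<subseteq> V \<and> card e = 2"
    and BV: "B \<subseteq> V" and FB: "\<forall>e\<in>F. e \<inter> B = {}"
    and nz1: "ZBP V E d p Aten mu B OB \<noteq> 0"
    and nz2: "ZBP V E d p Aten mu {} (\<lambda>_ _. 1) \<noteq> 0"
  shows "Zpoly V E d p Aten mu B OB F = Zpoly V E d p Aten mu {} (\<lambda>_ _. 1) F"
  using poly_eqB[where Sx="{}" and Ox="\<lambda>_ _. 1" and OB=OB, OF finV graph BV _ _ FB] nz1 nz2
  by (simp add: Zpoly_opprod_empty ZBP_opprod_empty)

lemma opprod_comm: "opprod A OA B OB = opprod B OB A OA"
  unfolding opprod_def by (simp add: fun_eq_iff mult.commute)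

lemma ZBP_prod:
  assumes finV: "finite V" and graph: "\<forall>e\<in>E. e \<subseteq> V \<and> card e = 2"
    and AV: "A \<subseteq> V" and BV: "B \<subseteq> V" and dj: "A \<inter> B = {}"
  shows "ZBP V E d p Aten mu (A \<union> B) (opprod A OA B OB) * ZBP V E d p Aten mu {} (\<lambda>_ _. 1)
       = ZBP V E d p Aten mu A OA * ZBP V E d p Aten mu B OB"
proof -
  obtain X where X: "Ztilde V E d p Aten mu (A \<union> B) (opprod A OA B OB) {} = X * YB E d p Aten mu B OB"
           "Ztilde V E d p Aten mu A OA {} = X * YB' E d p Aten mu B"
    using factor[OF finV graph BV AV dj, of "{}"] by blast
  obtain X0 where X0: "Ztilde V E d p Aten mu ({} \<union> B) (opprod {} (\<lambda>_ _. 1) B OB) {} = X0 * YB E d p Aten mu B OB"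
           "Ztilde V E d p Aten mu {} (\<lambda>_ _. 1) {} = X0 * YB' E d p Aten mu B"
    using factor[where Sx="{}" and F="{}" and Ox="\<lambda>_ _. 1" and OB=OB and d=d and p=p and Aten=Aten and mu=mu, OF finV graph BV] by auto
  show ?thesis using X X0 unfolding ZBP_def by (simp add: Ztilde_opprod_empty)
qed

lemma Zclus_cong:
  "(\<And>l. l \<in> set_mset W \<Longrightarrow> Zpoly V E d p Aten mu S Op l = Zpoly V E d p Aten mu S' Op' l)
   \<Longrightarrow> Zclus V E d p Aten mu S Op W = Zclus V E d p Aten mu S' Op' W"
  unfolding Zclus_def by (intro prod.cong) auto

theorem mainTheorem8:
  fixes V :: "'v set" and E :: "'v set set" and d :: "'v set \<Rightarrow> nat" and p :: "'v \<Rightarrow> nat"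
    and Aten :: "'v \<Rightarrow> nat \<Rightarrow> ('v set \<Rightarrow> nat) \<Rightarrow> complex"
    and mu :: "'v \<Rightarrow> 'v \<Rightarrow> nat \<times> nat \<Rightarrow> complex"
    and A B :: "'v set"
    and OA OB :: "('v \<Rightarrow> nat) \<Rightarrow> ('v \<Rightarrow> nat) \<Rightarrow> complex"
  defines "ins \<equiv> [({}, \<lambda>_ _. 1), (A, OA), (B, OB), (A \<union> B, opprod A OA B OB)]"
  assumes finV: "finite V"
    and graph: "\<forall>e\<in>E. e \<subseteq> V \<and> card e = 2"
    and AV: "A \<subseteq> V" and BV: "B \<subseteq> V" and disj: "A \<inter> B = {}"
    and Zpos: "0 < Re (Zfull V E d p Aten {} (\<lambda>_ _. 1))"
    and BP: "bp_fixed_point V E d p Aten mu"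
    and ZBPnz: "\<forall>(S, Op)\<in>set ins. ZBP V E d p Aten mu S Op \<noteq> 0"
    and OAnz: "expect V E d p Aten A OA \<noteq> 0"
    and OBnz: "expect V E d p Aten B OB \<noteq> 0"
    and summ: "\<forall>(S, Op)\<in>set ins.
       (\<lambda>W. norm (complex_of_real (ursell W) * Zclus V E d p Aten mu S Op W))
          summable_on connected_clusters E A B"
    and cexp: "\<forall>(S, Op)\<in>set ins. \<exists>L LBP.
       exp L = Zfull V E d p Aten S Op \<and> exp LBP = ZBP V E d p Aten mu S Op \<and>
       L = LBP + (\<Sum>\<^sub>\<infinity>W\<in>connected_clusters E A B.
                     complex_of_real (ursell W) * Zclus V E d p Aten mu S Op W)"
  shows "expect V E d p Aten (A \<union> B) (opprod A OA B OB)
           - expect V E d p Aten A OA * expect V E d p Aten B OB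
         = expect V E d p Aten A OA * expect V E d p Aten B OB *
           (exp (\<Sum>\<^sub>\<infinity>W\<in>{W\<in>connected_clusters E A B. csupp W \<inter> A \<noteq> {} \<and> csupp W \<inter> B \<noteq> {}}.
                  complex_of_real (ursell W) *
                  (Zclus V E d p Aten mu (A \<union> B) (opprod A OA B OB) W
                   + Zclus V E d p Aten mu {} (\<lambda>_ _. 1) W
                   - Zclus V E d p Aten mu A OA W
                   - Zclus V E d p Aten mu B OB W)) - 1)"
proof -
  define O1 :: "('v \<Rightarrow> nat) \<Rightarrow> ('v \<Rightarrow> nat) \<Rightarrow> complex" where "O1 = (\<lambda>_ _. 1)"
  define OAB where "OAB = opprod A OA B OB"
  define CC where "CC = connected_clusters E A B"
  define R where "R = {W\<in>connected_clusters E A B. csupp W \<inter> A \<noteq> {} \<and> csupp W \<inter> B \<noteq> {}}"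
  define f where "f S Op W = complex_of_real (ursell W) * Zclus V E d p Aten mu S Op W" for S Op W
  define Sg where "Sg S Op = infsum (f S Op) CC" for S Op
  have ZBP4: "ZBP V E d p Aten mu {} O1 \<noteq> 0" "ZBP V E d p Aten mu A OA \<noteq> 0"
     "ZBP V E d p Aten mu B OB \<noteq> 0" "ZBP V E d p Aten mu (A \<union> B) OAB \<noteq> 0"
    using ZBPnz unfolding ins_def O1_def OAB_def by auto
  have sm: "f {} O1 summable_on CC" "f A OA summable_on CC" "f B OB summable_on CC" "f (A \<union> B) OAB summable_on CC"
    using summ unfolding ins_def O1_def OAB_def f_def CC_def by (auto intro: abs_summable_summable)
  have ce: "\<exists>L LBP. exp L = Zfull V E d p Aten S Op \<and> exp LBP = ZBP V E d p Aten mu S Op \<and> L = LBP + Sg S Op"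
    if "(S, Op) \<in> set ins" for S Op
    using cexp that unfolding Sg_def f_def CC_def by fastforce
  obtain L0 LB0 where c0: "exp L0 = Zfull V E d p Aten {} O1" "exp LB0 = ZBP V E d p Aten mu {} O1" "L0 = LB0 + Sg {} O1"
    using ce[of "{}" O1] unfolding ins_def O1_def by auto
  obtain LA LBA where cA: "exp LA = Zfull V E d p Aten A OA" "exp LBA = ZBP V E d p Aten mu A OA" "LA = LBA + Sg A OA"
    using ce[of A OA] unfolding ins_def by auto
  obtain LB LBB where cB: "exp LB = Zfull V E d p Aten B OB" "exp LBB = ZBP V E d p Aten mu B OB" "LB = LBB + Sg B OB"
    using ce[of B OB] unfolding ins_def by auto
  obtain LAB LBAB where cAB: "exp LAB = Zfull V E d p Aten (A \<union> B) OAB" "exp LBAB = ZBP V E d p Aten mu (A \<union> B) OAB"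
      "LAB = LBAB + Sg (A \<union> B) OAB"
    using ce[of "A \<union> B" OAB] unfolding ins_def OAB_def by auto
  define g where "g W = f (A \<union> B) OAB W + f {} O1 W + - f A OA W + - f B OB W" for W
  have sumg: "infsum g CC = Sg (A \<union> B) OAB + Sg {} O1 + - Sg A OA + - Sg B OB"
  proof (rule infsumI)
    show "(g has_sum (Sg (A \<union> B) OAB + Sg {} O1 + - Sg A OA + - Sg B OB)) CC"
      unfolding g_def Sg_def using sm
      by (intro has_sum_add has_sum_uminusI has_sum_infsum)
  qed
  have van: "g W = 0" if W: "W \<in> CC - R" for W
  proof -
    have supp: "\<forall>l\<in>set_mset W. \<forall>e\<in>l. e \<inter> X = {}" if "csupp W \<inter> X = {}" for X
      using that unfolding csupp_def esupp_def by auto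
    from W have "csupp W \<inter> A = {} \<or> csupp W \<inter> B = {}" unfolding CC_def R_def by auto
    then show ?thesis
    proof
      assume "csupp W \<inter> A = {}"
      then have l: "\<forall>e\<in>l. e \<inter> A = {}" if "l \<in> set_mset W" for l using supp that by blast
      have "Zclus V E d p Aten mu (B \<union> A) (opprod B OB A OA) W = Zclus V E d p Aten mu B OB W"
        using ZBP4 disj by (intro Zclus_cong poly_eqB[OF finV graph AV BV] l)
           (auto simp: OAB_def Un_commute opprod_comm)
      moreover have "Zclus V E d p Aten mu A OA W = Zclus V E d p Aten mu {} O1 W"
        using ZBP4 unfolding O1_def by (intro Zclus_cong poly_eqB0[OF finV graph AV] l) auto
      ultimately show ?thesis unfolding g_def f_def OAB_def by (simp add: Un_commute opprod_comm)
    next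
      assume "csupp W \<inter> B = {}"
      then have l: "\<forall>e\<in>l. e \<inter> B = {}" if "l \<in> set_mset W" for l using supp that by blast
      have "Zclus V E d p Aten mu (A \<union> B) (opprod A OA B OB) W = Zclus V E d p Aten mu A OA W"
        using ZBP4 disj by (intro Zclus_cong poly_eqB[OF finV graph BV AV] l) (auto simp: OAB_def)
      moreover have "Zclus V E d p Aten mu B OB W = Zclus V E d p Aten mu {} O1 W"
        using ZBP4 unfolding O1_def by (intro Zclus_cong poly_eqB0[OF finV graph BV] l) auto
      ultimately show ?thesis unfolding g_def f_def OAB_def by simp
    qed
  qed
  define T where "T = infsum (\<lambda>W. complex_of_real (ursell W) *
                  (Zclus V E d p Aten mu (A \<union> B) (opprod A OA B OB) W
                   + Zclus V E d p Aten mu {} (\<lambda>_ _. 1) W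
                   - Zclus V E d p Aten mu A OA W
                   - Zclus V E d p Aten mu B OB W)) R"
  have "T = infsum g R"
    unfolding T_def g_def f_def OAB_def O1_def by (intro infsum_cong) (simp add: algebra_simps)
  also have "\<dots> = infsum g CC"
    by (rule infsum_cong_neutral) (use van in \<open>auto simp: R_def CC_def\<close>)
  finally have T: "T = Sg (A \<union> B) OAB + Sg {} O1 + - Sg A OA + - Sg B OB" using sumg by simp
  have zbpp: "ZBP V E d p Aten mu (A \<union> B) OAB * ZBP V E d p Aten mu {} O1
       = ZBP V E d p Aten mu A OA * ZBP V E d p Aten mu B OB"
    unfolding OAB_def O1_def by (rule ZBP_prod[OF finV graph AV BV disj])
  have nz0: "Zfull V E d p Aten {} O1 \<noteq> 0" using Zpos unfolding O1_def by auto
  have nzA: "Zfull V E d p Aten A OA \<noteq> 0" using OAnz unfolding expect_def by auto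
  have nzB: "Zfull V E d p Aten B OB \<noteq> 0" using OBnz unfolding expect_def by auto
  have "exp (LAB + L0 - LA - LB) = exp (LBAB + LB0 - LBA - LBB) * exp T"
    unfolding T cAB(3) c0(3) cA(3) cB(3) by (simp add: exp_add[symmetric] algebra_simps)
  also have "exp (LBAB + LB0 - LBA - LBB) = 1"
    using zbpp ZBP4 by (simp add: exp_diff exp_add cAB(2) c0(2) cA(2) cB(2) field_simps)
  finally have key: "Zfull V E d p Aten (A \<union> B) OAB * Zfull V E d p Aten {} O1 =
      exp T * (Zfull V E d p Aten A OA * Zfull V E d p Aten B OB)"
    using nzA nzB by (simp add: exp_diff exp_add cAB(1) c0(1) cA(1) cB(1) field_simps
       del: exp_eq_one_iff)
  have fin: "Zfull V E d p Aten (A \<union> B) OAB / Zfull V E d p Aten {} O1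
     - Zfull V E d p Aten A OA / Zfull V E d p Aten {} O1 * (Zfull V E d p Aten B OB / Zfull V E d p Aten {} O1)
     = Zfull V E d p Aten A OA / Zfull V E d p Aten {} O1 * (Zfull V E d p Aten B OB / Zfull V E d p Aten {} O1)
       * (exp T - 1)"
    using key nz0 nzA nzB by (simp add: field_simps)
  then show ?thesis unfolding expect_def T_def R_def OAB_def O1_def .
qed

end
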